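(* Let $n,p,m\in\mathbb N$ with $n\ge m\ge3$, let $\boldsymbol\varepsilon\sim\mathcal N_m(\mathbf0,\mathbf I)$, let $\mathbf a\in\mathbb R^m$ and suppose $0<\eta<pe^{-(n-m)-2}$. Then $$\mathbb P\Big(\mathbf a^T\boldsymbol\varepsilon/\|\boldsymbol\varepsilon\|_2>\sqrt{2\log(p/\eta)/n}\,\|\mathbf a\|_2\Big)\le\frac1p\cdot\frac{(1+r_m)\eta}{\sqrt{\pi\log(p/\eta)}},$$ where $(r_m)$ is a sequence depending only on $m$ with $r_m\to0$ as $m\to\infty$. *)

theory Defs
  imports "HOL-Probability.Probability"
begin

text \<open>Law of a standard Gaussian vector N_m(0, I) on R^m, vectors represented as
  functions nat \<Rightarrow> real with coordinates indexed by {..<m}: the m-fold product of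
  the standard normal distribution on the real line.\<close>
definition std_gauss_vec :: "nat \<Rightarrow> (nat \<Rightarrow> real) measure" where
  "std_gauss_vec m = PiM {..<m} (\<lambda>_. density lborel std_normal_density)"

definition vnorm :: "nat \<Rightarrow> (nat \<Rightarrow> real) \<Rightarrow> real" where
  "vnorm m x = sqrt (\<Sum>i<m. (x i)\<^sup>2)"

definition vinner :: "nat \<Rightarrow> (nat \<Rightarrow> real) \<Rightarrow> (nat \<Rightarrow> real) \<Rightarrow> real" where
  "vinner m x y = (\<Sum>i<m. x i * y i)"

end

theory Submission
  imports Defs "HOL-Analysis.Harmonic_Numbers" "HOL-Real_Asymp.Real_Asymp"
begin


lemma ln_lower2:
  fixes x :: real assumes "0 \<le> x" shows "x - x\<^sup>2/2 \<le> ln (1+x)"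
proof -
  let ?f = "\<lambda>x::real. ln (1+x) - (x - x\<^sup>2/2)"
  have d: "\<And>z. 0 \<le> z \<Longrightarrow> (?f has_real_derivative (1/(1+z) - (1 - z))) (at z)"
    by (auto intro!: derivative_eq_intros simp: power2_eq_square field_simps)
  have "?f 0 \<le> ?f x"
  proof (rule DERIV_nonneg_imp_nondecreasing[of 0 x ?f])
    show "0 \<le> x" by fact
    fix z assume "0 \<le> z" "z \<le> x"
    show "\<exists>y. (?f has_real_derivative y) (at z) \<and> 0 \<le> y"
      apply (rule exI[of _ "1/(1+z) - (1 - z)"])
      using d[OF \<open>0\<le>z\<close>] \<open>0\<le>z\<close> by (auto simp: field_simps power2_eq_square)
  qed
  then show ?thesis by simp
qed

lemma ln_upper2:
  fixes y :: real assumes "0 \<le> y" "y < 1" shows "ln (1-y) \<le> - y - y\<^sup>2/2"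
proof -
  let ?f = "\<lambda>x::real. - x - x\<^sup>2/2 - ln (1-x)"
  have d: "\<And>z. z < 1 \<Longrightarrow> (?f has_real_derivative (-1 - z + 1/(1-z))) (at z)"
    by (auto intro!: derivative_eq_intros simp: power2_eq_square field_simps)
  have "?f 0 \<le> ?f y"
  proof (rule DERIV_nonneg_imp_nondecreasing[of 0 y ?f])
    show "0 \<le> y" by fact
    fix z assume z: "0 \<le> z" "z \<le> y"
    with assms have "z < 1" by simp
    have "0 \<le> -1 - z + 1/(1-z)"
    proof -
      have "(1 + z) * (1 - z) \<le> 1" by (simp add: algebra_simps)
      then have "1 + z \<le> 1/(1-z)" using \<open>z<1\<close> by (simp add: field_simps)
      then show ?thesis by simp
    qed
    then show "\<exists>d. (?f has_real_derivative d) (at z) \<and> 0 \<le> d"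
      using d[OF \<open>z<1\<close>] by blast
  qed
  then show ?thesis by simp
qed

lemma key_ineq:
  fixes k j L :: real
  assumes k: "k \<ge> 2" and j: "j \<ge> 1" and L1: "j + 1 < L" and L2: "2 * L < k + j"
  shows "(k/2) * ln (1 - 2*L/(k+j)) \<le> - L + ln (k/(k+j)) / 2"
proof -
  define n where "n = k + j"
  define L0 where "L0 = j + 1"
  have kj: "k - j - 2 > 0" using L1 L2 by simp
  have n0: "n > 0" using k j by (simp add: n_def)
  have pos: "n - 2*L > 0" using L2 by (simp add: n_def)
  have pos0: "n - 2*L0 > 0" using kj by (simp add: n_def L0_def)
  have e1: "1 - 2*L/n = (n - 2*L)/n" using n0 by (simp add: field_simps)
  have e0: "1 - 2*L0/n = (n - 2*L0)/n" using n0 by (simp add: field_simps)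
  have s1: "ln (1 - 2*L/n) \<le> ln (1 - 2*L0/n) - 2*(L-L0)/(n-2*L0)"
  proof -
    have "ln (1 - 2*L/n) - ln (1 - 2*L0/n) = ln ((n-2*L)/(n-2*L0))"
      using pos pos0 n0 by (simp add: e1 e0 ln_div)
    also have "\<dots> \<le> (n-2*L)/(n-2*L0) - 1" using pos pos0 by (intro ln_le_minus_one) simp
    also have "\<dots> = - (2*(L-L0)/(n-2*L0))" using pos0 by (simp add: field_simps)
    finally show ?thesis by linarith
  qed
  have s1': "(k/2) * ln (1 - 2*L/n) + L \<le> (k/2) * ln (1 - 2*L0/n) + L0"
  proof -
    have "(k/2) * ln (1 - 2*L/n) \<le> (k/2) * (ln (1 - 2*L0/n) - 2*(L-L0)/(n-2*L0))"
      using s1 k by (intro mult_left_mono) auto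
    also have "\<dots> = (k/2) * ln (1 - 2*L0/n) - (L - L0) * (k/(n-2*L0))"
      using pos0 by (simp add: field_simps)
    also have "\<dots> \<le> (k/2) * ln (1 - 2*L0/n) - (L - L0)"
    proof -
      have "1 \<le> k/(n-2*L0)" using pos0 j by (simp add: field_simps n_def L0_def)
      then have "(L - L0) * 1 \<le> (L - L0) * (k/(n-2*L0))"
        using L1 by (intro mult_left_mono) (auto simp: L0_def)
      then show ?thesis by simp
    qed
    finally show ?thesis by simp
  qed
  define x where "x = j / k"
  define y where "y = (j+2)/k"
  have x0: "x \<ge> 0" using j k by (simp add: x_def)
  have y0: "0 \<le> y" "y < 1" using kj k j by (auto simp: y_def field_simps)
  have split: "1 - 2*L0/n = (1 - y) / (1 + x)"
  proof -
    have a: "1 - y = (k-j-2)/k" "1 + x = (k+j)/k" using k by (simp_all add: x_def y_def field_simps)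
    have "(1 - y) / (1 + x) = (k-j-2)/(k+j)" using k j unfolding a by (simp add: divide_divide_eq_right)
    moreover have "1 - 2*L0/n = (k-j-2)/(k+j)" using n0 by (simp add: L0_def n_def field_simps)
    ultimately show ?thesis by simp
  qed
  have "ln (1 - 2*L0/n) = ln (1-y) - ln (1+x)"
    using y0 x0 by (simp add: split ln_div)
  also have "\<dots> \<le> (- y - y\<^sup>2/2) - (x - x\<^sup>2/2)"
    using ln_upper2[OF y0] ln_lower2[OF x0] by linarith
  finally have s2: "ln (1 - 2*L0/n) \<le> (- y - y\<^sup>2/2) - (x - x\<^sup>2/2)" .
  have s2': "(k/2) * ln (1 - 2*L0/n) + L0 \<le> - (j+1)/k"
  proof -
    have "(k/2) * ln (1 - 2*L0/n) \<le> (k/2) * ((- y - y\<^sup>2/2) - (x - x\<^sup>2/2))"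
      using s2 k by (intro mult_left_mono) auto
    also have "\<dots> + L0 = - (j+1)/k"
      using k by (simp add: x_def y_def L0_def field_simps power2_eq_square)
    finally show ?thesis by simp
  qed
  have s3: "ln (k/n) / 2 \<ge> - x/2"
  proof -
    have "k/n = 1/(1+x)" using k by (simp add: x_def n_def field_simps)
    then have "ln (k/n) = - ln (1+x)" using x0 by (simp add: ln_div)
    then show ?thesis using ln_add_one_self_le_self[OF x0] by simp
  qed
  have "- (j+1)/k \<le> - x/2" using k j by (simp add: x_def field_simps) (smt (verit) mult_nonneg_nonneg)
  with s1' s2' s3 show ?thesis unfolding n_def by linarith
qed



definition NN :: "real measure" where "NN = density lborel std_normal_density"

lemma NN_prob: "prob_space NN"
  unfolding NN_def by (rule prob_space_normal_density) simp

lemma sets_NN[simp, measurable_cong]: "sets NN = sets borel"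
  by (simp add: NN_def)

lemma space_NN[simp]: "space NN = UNIV"
  by (simp add: NN_def)

lemma nn_integral_NN:
  assumes [measurable]: "f \<in> borel_measurable borel"
  shows "(\<integral>\<^sup>+x. f x \<partial>NN) = (\<integral>\<^sup>+x. ennreal (std_normal_density x) * f x \<partial>lborel)"
  unfolding NN_def by (subst nn_integral_density) auto

lemma NN_reflect:
  assumes [measurable]: "f \<in> borel_measurable borel"
  shows "(\<integral>\<^sup>+x. f (- x) \<partial>NN) = (\<integral>\<^sup>+x. f x \<partial>NN)"
proof -
  have "(\<integral>\<^sup>+x. f x \<partial>NN) = (\<integral>\<^sup>+x. ennreal (std_normal_density x) * f x \<partial>lborel)"
    by (rule nn_integral_NN) simp
  also have "\<dots> = ennreal \<bar>-1::real\<bar> * (\<integral>\<^sup>+x. ennreal (std_normal_density (0 + (-1) * x)) * f (0 + (-1) * x) \<partial>lborel)"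
    by (rule nn_integral_real_affine) auto
  also have "\<dots> = (\<integral>\<^sup>+x. ennreal (std_normal_density x) * f (- x) \<partial>lborel)"
    by (simp add: std_normal_density_def)
  also have "\<dots> = (\<integral>\<^sup>+x. f (- x) \<partial>NN)"
    by (rule nn_integral_NN[symmetric]) simp
  finally show ?thesis ..
qed

lemma NN_mgf:
  fixes \<beta> :: real assumes b: "\<beta> \<ge> 0"
  shows "(\<integral>\<^sup>+x. ennreal (exp (- \<beta> * x\<^sup>2)) \<partial>NN) = ennreal (1 / sqrt (1 + 2*\<beta>))"
proof -
  define \<sigma> where "\<sigma> = 1 / sqrt (1 + 2*\<beta>)"
  have s0: "\<sigma> > 0" using b by (simp add: \<sigma>_def)
  have s2: "\<sigma>\<^sup>2 = 1 / (1 + 2*\<beta>)" using b by (simp add: \<sigma>_def power_divide)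
  have eq: "std_normal_density x * exp (- \<beta> * x\<^sup>2) = \<sigma> * normal_density 0 \<sigma> x" for x
  proof -
    have "sqrt (2 * pi * \<sigma>\<^sup>2) = sqrt (2*pi) * \<sigma>" using s0 by (simp add: real_sqrt_mult)
    moreover have "- x\<^sup>2 / (2 * \<sigma>\<^sup>2) = - x\<^sup>2/2 + - \<beta> * x\<^sup>2" using b by (simp add: s2 field_simps)
    ultimately show ?thesis using s0
      by (simp add: normal_density_def std_normal_density_def exp_add[symmetric])
  qed
  have "(\<integral>\<^sup>+x. ennreal (exp (- \<beta> * x\<^sup>2)) \<partial>NN) = (\<integral>\<^sup>+x. ennreal (std_normal_density x) * ennreal (exp (- \<beta> * x\<^sup>2)) \<partial>lborel)"
    by (rule nn_integral_NN) simp
  also have "\<dots> = (\<integral>\<^sup>+x. ennreal \<sigma> * ennreal (normal_density 0 \<sigma> x) \<partial>lborel)"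
  proof (intro nn_integral_cong)
    fix x
    have "ennreal (std_normal_density x) * ennreal (exp (- \<beta> * x\<^sup>2)) = ennreal (std_normal_density x * exp (- \<beta> * x\<^sup>2))"
      by (simp add: ennreal_mult)
    also have "\<dots> = ennreal (\<sigma> * normal_density 0 \<sigma> x)" by (simp only: eq)
    also have "\<dots> = ennreal \<sigma> * ennreal (normal_density 0 \<sigma> x)" using s0 by (simp add: ennreal_mult)
    finally show "ennreal (std_normal_density x) * ennreal (exp (- \<beta> * x\<^sup>2)) = ennreal \<sigma> * ennreal (normal_density 0 \<sigma> x)" .
  qed
  also have "\<dots> = ennreal \<sigma> * (\<integral>\<^sup>+x. ennreal (normal_density 0 \<sigma> x) \<partial>lborel)"
    by (rule nn_integral_cmult) simp
  also have "(\<integral>\<^sup>+x. ennreal (normal_density 0 \<sigma> x) \<partial>lborel) = 1"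
  proof -
    interpret prob_space "density lborel (normal_density 0 \<sigma>)" by (rule prob_space_normal_density) (rule s0)
    have "emeasure (density lborel (normal_density 0 \<sigma>)) UNIV = 1"
      using emeasure_space_1 by simp
    then show ?thesis by (simp add: emeasure_density)
  qed
  finally show ?thesis by (simp add: \<sigma>_def)
qed

lemma NN_mills:
  fixes y :: real assumes y: "y > 0"
  shows "emeasure NN {y<..} \<le> ennreal (std_normal_density y / y)"
proof -
  have "emeasure NN {y<..} \<le> emeasure NN {y..}"
    by (intro emeasure_mono) auto
  also have "\<dots> = (\<integral>\<^sup>+x. ennreal (std_normal_density x) * indicator {y..} x \<partial>lborel)"
    unfolding NN_def by (subst emeasure_density) auto
  also have "\<dots> \<le> (\<integral>\<^sup>+x. ennreal (1/y) * (ennreal (x * std_normal_density x) * indicator {y..} x) \<partial>lborel)"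
  proof (intro nn_integral_mono)
    fix x show "ennreal (std_normal_density x) * indicator {y..} x
        \<le> ennreal (1/y) * (ennreal (x * std_normal_density x) * indicator {y..} x)"
    proof (cases "y \<le> x")
      case True
      have "std_normal_density x \<le> (1/y) * (x * std_normal_density x)"
        using y True by (simp add: field_simps mult_right_mono)
      then show ?thesis using True y
        by (simp add: ennreal_mult[symmetric] ennreal_leI)
    qed simp
  qed
  also have "\<dots> = ennreal (1/y) * (\<integral>\<^sup>+x. ennreal (x * std_normal_density x) * indicator {y..} x \<partial>lborel)"
    by (rule nn_integral_cmult) simp
  also have "(\<integral>\<^sup>+x. ennreal (x * std_normal_density x) * indicator {y..} x \<partial>lborel)
      = 0 - (- std_normal_density y)"
  proof (rule nn_integral_FTC_atLeast)
    show "(\<lambda>x. x * std_normal_density x) \<in> borel_measurable borel" by simp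
    fix x assume "y \<le> x"
    show "((\<lambda>x. - std_normal_density x) has_real_derivative x * std_normal_density x) (at x)"
      unfolding std_normal_density_def
      by (auto intro!: derivative_eq_intros simp: power2_eq_square field_simps)
    show "0 \<le> x * std_normal_density x" using \<open>y \<le> x\<close> y by simp
  next
    show "((\<lambda>x. - std_normal_density x) \<longlongrightarrow> 0) at_top"
      unfolding std_normal_density_def by real_asymp
  qed
  finally show ?thesis using y by (simp add: ennreal_mult[symmetric])
qed



lemma shear1:
  fixes F :: "real \<Rightarrow> real \<Rightarrow> ennreal"
  assumes [measurable]: "case_prod F \<in> borel_measurable (lborel \<Otimes>\<^sub>M lborel)"
  shows "(\<integral>\<^sup>+y. \<integral>\<^sup>+x. F (x + a*y) y \<partial>lborel \<partial>lborel) = (\<integral>\<^sup>+y. \<integral>\<^sup>+x. F x y \<partial>lborel \<partial>lborel)"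
proof -
  have inner: "(\<integral>\<^sup>+x. F (x + a*y) y \<partial>lborel) = (\<integral>\<^sup>+x. F x y \<partial>lborel)" for y
  proof -
    have m: "(\<lambda>x. F x y) \<in> borel_measurable borel" by measurable
    have "(\<integral>\<^sup>+x. F x y \<partial>lborel) = ennreal \<bar>1::real\<bar> * (\<integral>\<^sup>+x. F (a*y + 1 * x) y \<partial>lborel)"
      by (rule nn_integral_real_affine[OF m]) simp
    then show ?thesis by (simp add: add.commute)
  qed
  show ?thesis by (simp add: inner)
qed

lemma shear2:
  fixes F :: "real \<Rightarrow> real \<Rightarrow> ennreal"
  assumes [measurable]: "case_prod F \<in> borel_measurable (lborel \<Otimes>\<^sub>M lborel)"
  shows "(\<integral>\<^sup>+y. \<integral>\<^sup>+x. F x (y + b*x) \<partial>lborel \<partial>lborel) = (\<integral>\<^sup>+y. \<integral>\<^sup>+x. F x y \<partial>lborel \<partial>lborel)"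
proof -
  have "(\<integral>\<^sup>+y. \<integral>\<^sup>+x. F x (y + b*x) \<partial>lborel \<partial>lborel) = (\<integral>\<^sup>+x. \<integral>\<^sup>+y. F x (y + b*x) \<partial>lborel \<partial>lborel)"
    by (rule lborel_pair.Fubini') measurable
  also have "\<dots> = (\<integral>\<^sup>+x. \<integral>\<^sup>+y. F x y \<partial>lborel \<partial>lborel)"
  proof -
    have inner: "(\<integral>\<^sup>+y. F x (y + b*x) \<partial>lborel) = (\<integral>\<^sup>+y. F x y \<partial>lborel)" for x
    proof -
      have m: "(\<lambda>y. F x y) \<in> borel_measurable borel" by measurable
      have "(\<integral>\<^sup>+y. F x y \<partial>lborel) = ennreal \<bar>1::real\<bar> * (\<integral>\<^sup>+y. F x (b*x + 1 * y) \<partial>lborel)"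
        by (rule nn_integral_real_affine[OF m]) simp
      then show ?thesis by (simp add: add.commute)
    qed
    show ?thesis by (simp add: inner)
  qed
  also have "\<dots> = (\<integral>\<^sup>+y. \<integral>\<^sup>+x. F x y \<partial>lborel \<partial>lborel)"
    by (rule lborel_pair.Fubini'[symmetric]) measurable
  finally show ?thesis .
qed

lemma rot_lborel:
  fixes F :: "real \<Rightarrow> real \<Rightarrow> ennreal" and c s :: real
  assumes [measurable]: "case_prod F \<in> borel_measurable (lborel \<Otimes>\<^sub>M lborel)"
    and cs: "c\<^sup>2 + s\<^sup>2 = 1" and c: "c \<ge> 0" and s: "s \<noteq> 0"
  shows "(\<integral>\<^sup>+y. \<integral>\<^sup>+x. F (c*x + s*y) (c*y - s*x) \<partial>lborel \<partial>lborel) = (\<integral>\<^sup>+y. \<integral>\<^sup>+x. F x y \<partial>lborel \<partial>lborel)"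
proof -
  define \<alpha> where "\<alpha> = (1 - c) / s"
  define \<beta> where "\<beta> = - s"
  define F1 where "F1 x y = F (x + \<alpha>*y) y" for x y
  define F2 where "F2 x y = F1 x (y + \<beta>*x)" for x y
  have m1[measurable]: "case_prod F1 \<in> borel_measurable (lborel \<Otimes>\<^sub>M lborel)"
    unfolding F1_def by measurable
  have m2[measurable]: "case_prod F2 \<in> borel_measurable (lborel \<Otimes>\<^sub>M lborel)"
    unfolding F2_def by measurable
  have ab: "\<alpha> * \<beta> = c - 1" using s by (simp add: \<alpha>_def \<beta>_def field_simps)
  have a2: "\<alpha> * (1 + c) = s"
  proof -
    have "\<alpha> * (1 + c) = (1 - c\<^sup>2) / s" by (simp add: \<alpha>_def power2_eq_square algebra_simps)
    also have "\<dots> = s" using cs s by (simp add: power2_eq_square field_simps)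
    finally show ?thesis .
  qed
  have eq: "F (c*x + s*y) (c*y - s*x) = F2 (x + \<alpha>*y) y" for x y
  proof -
    have e1: "x + \<alpha>*y + \<alpha>*(y + \<beta>*(x + \<alpha>*y)) = c*x + s*y"
    proof -
      have "x + \<alpha>*y + \<alpha>*(y + \<beta>*(x + \<alpha>*y)) = (1 + \<alpha>*\<beta>)*x + \<alpha>*(2 + \<alpha>*\<beta>)*y"
        by (simp add: algebra_simps)
      also have "\<dots> = c*x + (\<alpha>*(1+c))*y" by (simp add: ab)
      finally show ?thesis by (simp add: a2)
    qed
    have e2: "y + \<beta>*(x + \<alpha>*y) = c*y - s*x"
    proof -
      have "y + \<beta>*(x + \<alpha>*y) = (1 + \<alpha>*\<beta>)*y + \<beta>*x" by (simp add: algebra_simps)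
      also have "\<dots> = c*y - s*x" by (simp add: ab) (simp add: \<beta>_def)
      finally show ?thesis .
    qed
    have e1': "x + \<alpha>*y + \<alpha>*(c*y - s*x) = c*x + s*y" using e1 unfolding e2 .
    show ?thesis unfolding F2_def F1_def e2 e1' ..
  qed
  have "(\<integral>\<^sup>+y. \<integral>\<^sup>+x. F (c*x + s*y) (c*y - s*x) \<partial>lborel \<partial>lborel) = (\<integral>\<^sup>+y. \<integral>\<^sup>+x. F2 (x + \<alpha>*y) y \<partial>lborel \<partial>lborel)"
    by (simp add: eq)
  also have "\<dots> = (\<integral>\<^sup>+y. \<integral>\<^sup>+x. F2 x y \<partial>lborel \<partial>lborel)" by (rule shear1) measurable
  also have "\<dots> = (\<integral>\<^sup>+y. \<integral>\<^sup>+x. F1 x y \<partial>lborel \<partial>lborel)" unfolding F2_def by (rule shear2) measurable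
  also have "\<dots> = (\<integral>\<^sup>+y. \<integral>\<^sup>+x. F x y \<partial>lborel \<partial>lborel)" unfolding F1_def by (rule shear1) measurable
  finally show ?thesis .
qed

lemma NN2:
  fixes h :: "real \<Rightarrow> real \<Rightarrow> ennreal"
  assumes [measurable]: "case_prod h \<in> borel_measurable (lborel \<Otimes>\<^sub>M lborel)"
  shows "(\<integral>\<^sup>+y. \<integral>\<^sup>+x. h x y \<partial>NN \<partial>NN) =
    (\<integral>\<^sup>+y. \<integral>\<^sup>+x. ennreal (std_normal_density x * std_normal_density y) * h x y \<partial>lborel \<partial>lborel)"
proof -
  have "(\<integral>\<^sup>+y. \<integral>\<^sup>+x. h x y \<partial>NN \<partial>NN) = (\<integral>\<^sup>+y. \<integral>\<^sup>+x. ennreal (std_normal_density x) * h x y \<partial>lborel \<partial>NN)"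
    by (intro nn_integral_cong nn_integral_NN) measurable
  also have "\<dots> = (\<integral>\<^sup>+y. ennreal (std_normal_density y) * \<integral>\<^sup>+x. ennreal (std_normal_density x) * h x y \<partial>lborel \<partial>lborel)"
    by (rule nn_integral_NN) measurable
  also have "\<dots> = (\<integral>\<^sup>+y. \<integral>\<^sup>+x. ennreal (std_normal_density y) * (ennreal (std_normal_density x) * h x y) \<partial>lborel \<partial>lborel)"
    by (intro nn_integral_cong nn_integral_cmult[symmetric]) measurable
  also have "\<dots> = (\<integral>\<^sup>+y. \<integral>\<^sup>+x. ennreal (std_normal_density x * std_normal_density y) * h x y \<partial>lborel \<partial>lborel)"
    by (intro nn_integral_cong) (simp add: ennreal_mult mult_ac)
  finally show ?thesis .
qed

lemma rot2:
  fixes g :: "real \<times> real \<Rightarrow> ennreal" and a b :: real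
  assumes [measurable]: "g \<in> borel_measurable (borel \<Otimes>\<^sub>M borel)" and b: "b \<ge> 0"
  shows "(\<integral>\<^sup>+y. \<integral>\<^sup>+x. g (b*x + a*y, x\<^sup>2 + y\<^sup>2) \<partial>NN \<partial>NN) =
         (\<integral>\<^sup>+y. \<integral>\<^sup>+x. g (sqrt (a\<^sup>2 + b\<^sup>2) * x, x\<^sup>2 + y\<^sup>2) \<partial>NN \<partial>NN)"
proof (cases "a = 0")
  case True then show ?thesis using b by simp
next
  case False
  define r where "r = sqrt (a\<^sup>2 + b\<^sup>2)"
  have r0: "r > 0" using False by (simp add: r_def add_pos_nonneg)
  have r2: "r\<^sup>2 = a\<^sup>2 + b\<^sup>2" by (simp add: r_def)
  define c where "c = b / r"
  define s where "s = a / r"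
  have ab0: "a\<^sup>2 + b\<^sup>2 > 0" using False by (simp add: add_pos_nonneg)
  have cs: "c\<^sup>2 + s\<^sup>2 = 1"
  proof -
    have "c\<^sup>2 + s\<^sup>2 = (a\<^sup>2 + b\<^sup>2) / r\<^sup>2" by (simp add: c_def s_def power_divide add_divide_distrib add.commute)
    also have "\<dots> = 1" using r2 ab0 False by simp
    finally show ?thesis .
  qed
  have c0: "c \<ge> 0" using b r0 by (simp add: c_def)
  have s0: "s \<noteq> 0" using False r0 by (simp add: s_def)
  define F where "F u v = ennreal (std_normal_density u * std_normal_density v) * g (r*u, u\<^sup>2 + v\<^sup>2)" for u v
  have mF[measurable]: "case_prod F \<in> borel_measurable (lborel \<Otimes>\<^sub>M lborel)"
    unfolding F_def by measurable
  have phi: "std_normal_density u * std_normal_density v = exp (- (u\<^sup>2 + v\<^sup>2)/2) / (2*pi)" for u v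
    by (simp add: std_normal_density_def exp_add[symmetric] field_simps real_sqrt_mult[symmetric])
  have sq: "(c*x + s*y)\<^sup>2 + (c*y - s*x)\<^sup>2 = x\<^sup>2 + y\<^sup>2" for x y
  proof -
    have "(c*x + s*y)\<^sup>2 + (c*y - s*x)\<^sup>2 = (c\<^sup>2 + s\<^sup>2) * (x\<^sup>2 + y\<^sup>2)"
      by (simp add: power2_eq_square algebra_simps)
    then show ?thesis by (simp add: cs)
  qed
  have lin: "r * (c*x + s*y) = b*x + a*y" for x y
    using r0 by (simp add: c_def s_def field_simps)
  have eqF: "F (c*x + s*y) (c*y - s*x) = ennreal (std_normal_density x * std_normal_density y) * g (b*x + a*y, x\<^sup>2 + y\<^sup>2)" for x y
    unfolding F_def phi sq lin ..
  have "(\<integral>\<^sup>+y. \<integral>\<^sup>+x. g (b*x + a*y, x\<^sup>2 + y\<^sup>2) \<partial>NN \<partial>NN)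
      = (\<integral>\<^sup>+y. \<integral>\<^sup>+x. ennreal (std_normal_density x * std_normal_density y) * g (b*x + a*y, x\<^sup>2 + y\<^sup>2) \<partial>lborel \<partial>lborel)"
    by (rule NN2) measurable
  also have "\<dots> = (\<integral>\<^sup>+y. \<integral>\<^sup>+x. F (c*x + s*y) (c*y - s*x) \<partial>lborel \<partial>lborel)"
    by (simp add: eqF)
  also have "\<dots> = (\<integral>\<^sup>+y. \<integral>\<^sup>+x. F x y \<partial>lborel \<partial>lborel)"
    by (rule rot_lborel[OF mF cs c0 s0])
  also have "\<dots> = (\<integral>\<^sup>+y. \<integral>\<^sup>+x. g (r * x, x\<^sup>2 + y\<^sup>2) \<partial>NN \<partial>NN)"
    unfolding F_def by (rule NN2[symmetric]) measurable
  finally show ?thesis by (simp add: r_def)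
qed



definition GG :: "nat set \<Rightarrow> (nat \<Rightarrow> real) measure" where
  "GG I = PiM I (\<lambda>_. NN)"

interpretation NNs: prob_space NN by (rule NN_prob)

interpretation NNP: product_sigma_finite "\<lambda>_::nat. NN"
  by unfold_locales

lemma GG_prob: "prob_space (GG I)"
  unfolding GG_def by (rule prob_space_PiM) (simp add: NN_prob)

lemma sum_upd:
  assumes "finite I" "j \<notin> I"
  shows "(\<Sum>i\<in>insert j I. f i ((\<epsilon>(j:=y)) i)) = f j y + (\<Sum>i\<in>I. f i (\<epsilon> i))"
proof -
  have "(\<Sum>i\<in>I. f i ((\<epsilon>(j:=y)) i)) = (\<Sum>i\<in>I. f i (\<epsilon> i))"
    using assms by (intro sum.cong) auto
  then show ?thesis using assms by simp
qed

lemma sum_upd2: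
  assumes "j \<notin> I"
  shows "(\<Sum>i\<in>I. f i (if i = j then y else \<epsilon> i)) = (\<Sum>i\<in>I. f i (\<epsilon> i))"
  using assms by (intro sum.cong) auto

lemma test_meas:
  fixes g :: "real \<times> real \<Rightarrow> ennreal"
  assumes [measurable]: "g \<in> borel_measurable (borel \<Otimes>\<^sub>M borel)" "finite I"
  shows "(\<lambda>\<epsilon>. \<integral>\<^sup>+x. g (b*x + (\<Sum>i\<in>I. a i * \<epsilon> i), x\<^sup>2 + (\<Sum>i\<in>I. (\<epsilon> i)\<^sup>2)) \<partial>NN) \<in> borel_measurable (GG I)"
  unfolding GG_def by measurable

interpretation GGpair: pair_sigma_finite "GG I" NN
proof -
  interpret prob_space "GG I" by (rule GG_prob)
  show "pair_sigma_finite (GG I) NN" by unfold_locales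
qed

lemma rot_induct:
  fixes g :: "real \<times> real \<Rightarrow> ennreal" and a :: "nat \<Rightarrow> real"
  assumes "finite I"
  shows "b \<ge> 0 \<Longrightarrow> g \<in> borel_measurable (borel \<Otimes>\<^sub>M borel) \<Longrightarrow>
   (\<integral>\<^sup>+\<epsilon>. \<integral>\<^sup>+x. g (b*x + (\<Sum>i\<in>I. a i * \<epsilon> i), x\<^sup>2 + (\<Sum>i\<in>I. (\<epsilon> i)\<^sup>2)) \<partial>NN \<partial>GG I) =
   (\<integral>\<^sup>+\<epsilon>. \<integral>\<^sup>+x. g (sqrt (b\<^sup>2 + (\<Sum>i\<in>I. (a i)\<^sup>2)) * x, x\<^sup>2 + (\<Sum>i\<in>I. (\<epsilon> i)\<^sup>2)) \<partial>NN \<partial>GG I)"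
using assms proof (induction I arbitrary: b g rule: finite_induct)
  case empty then show ?case by simp
next
  case (insert j I)
  note [measurable] = insert.prems(2)
  note fin[measurable] = insert.hyps(1)
  define b' where "b' = sqrt ((a j)\<^sup>2 + b\<^sup>2)"
  have b'0: "b' \<ge> 0" by (simp add: b'_def)
  let ?A = "\<lambda>\<epsilon>. (\<Sum>i\<in>I. a i * \<epsilon> i)"
  let ?S = "\<lambda>\<epsilon>. (\<Sum>i\<in>I. (\<epsilon> i)\<^sup>2)"
  define r where "r = sqrt (b'\<^sup>2 + (\<Sum>i\<in>I. (a i)\<^sup>2))"
  have r_eq: "r = sqrt (b\<^sup>2 + (\<Sum>i\<in>insert j I. (a i)\<^sup>2))"
    using insert.hyps by (simp add: r_def b'_def add_ac)
  have "(\<integral>\<^sup>+\<epsilon>. \<integral>\<^sup>+x. g (b*x + (\<Sum>i\<in>insert j I. a i * \<epsilon> i), x\<^sup>2 + (\<Sum>i\<in>insert j I. (\<epsilon> i)\<^sup>2)) \<partial>NN \<partial>GG (insert j I))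
     = (\<integral>\<^sup>+\<epsilon>. \<integral>\<^sup>+y. \<integral>\<^sup>+x. g (b*x + (\<Sum>i\<in>insert j I. a i * (\<epsilon>(j:=y)) i), x\<^sup>2 + (\<Sum>i\<in>insert j I. ((\<epsilon>(j:=y)) i)\<^sup>2)) \<partial>NN \<partial>NN \<partial>GG I)"
    unfolding GG_def by (rule NNP.product_nn_integral_insert) (use insert.hyps in measurable)
  also have "\<dots> = (\<integral>\<^sup>+\<epsilon>. \<integral>\<^sup>+y. \<integral>\<^sup>+x. g (b*x + a j * y + ?A \<epsilon>, x\<^sup>2 + y\<^sup>2 + ?S \<epsilon>) \<partial>NN \<partial>NN \<partial>GG I)"
    using insert.hyps by (simp add: sum_upd2[where f="\<lambda>i v. a i * v"] sum_upd2[where f="\<lambda>i v. v\<^sup>2"] add_ac)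
  also have "\<dots> = (\<integral>\<^sup>+\<epsilon>. \<integral>\<^sup>+y. \<integral>\<^sup>+x. g (b'*x + ?A \<epsilon>, x\<^sup>2 + y\<^sup>2 + ?S \<epsilon>) \<partial>NN \<partial>NN \<partial>GG I)"
  proof -
    have "(\<integral>\<^sup>+y. \<integral>\<^sup>+x. g (b*x + a j * y + ?A \<epsilon>, x\<^sup>2 + y\<^sup>2 + ?S \<epsilon>) \<partial>NN \<partial>NN)
        = (\<integral>\<^sup>+y. \<integral>\<^sup>+x. g (b'*x + ?A \<epsilon>, x\<^sup>2 + y\<^sup>2 + ?S \<epsilon>) \<partial>NN \<partial>NN)" for \<epsilon>
    proof -
      define g' where "g' = (\<lambda>(u,v). g (u + ?A \<epsilon>, v + ?S \<epsilon>))"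
      have [measurable]: "g' \<in> borel_measurable (borel \<Otimes>\<^sub>M borel)" unfolding g'_def by measurable
      have "(\<integral>\<^sup>+y. \<integral>\<^sup>+x. g' (b*x + a j*y, x\<^sup>2 + y\<^sup>2) \<partial>NN \<partial>NN) = (\<integral>\<^sup>+y. \<integral>\<^sup>+x. g' (sqrt ((a j)\<^sup>2 + b\<^sup>2) * x, x\<^sup>2 + y\<^sup>2) \<partial>NN \<partial>NN)"
        by (rule rot2) (use insert.prems in auto)
      then show ?thesis by (simp add: g'_def b'_def)
    qed
    then show ?thesis by simp
  qed
  also have "\<dots> = (\<integral>\<^sup>+y. \<integral>\<^sup>+\<epsilon>. \<integral>\<^sup>+x. g (b'*x + ?A \<epsilon>, x\<^sup>2 + ?S \<epsilon> + y\<^sup>2) \<partial>NN \<partial>GG I \<partial>NN)"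
    by (subst GGpair.Fubini') (simp_all add: add_ac GG_def)
  also have "\<dots> = (\<integral>\<^sup>+y. \<integral>\<^sup>+\<epsilon>. \<integral>\<^sup>+x. g (r*x, x\<^sup>2 + ?S \<epsilon> + y\<^sup>2) \<partial>NN \<partial>GG I \<partial>NN)"
  proof -
    have "(\<integral>\<^sup>+\<epsilon>. \<integral>\<^sup>+x. g (b'*x + ?A \<epsilon>, x\<^sup>2 + ?S \<epsilon> + y\<^sup>2) \<partial>NN \<partial>GG I)
        = (\<integral>\<^sup>+\<epsilon>. \<integral>\<^sup>+x. g (r*x, x\<^sup>2 + ?S \<epsilon> + y\<^sup>2) \<partial>NN \<partial>GG I)" for y
    proof -
      define gy where "gy = (\<lambda>(u,v). g (u, v + y\<^sup>2))"
      have [measurable]: "gy \<in> borel_measurable (borel \<Otimes>\<^sub>M borel)" unfolding gy_def by measurable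
      have "(\<integral>\<^sup>+\<epsilon>. \<integral>\<^sup>+x. gy (b'*x + ?A \<epsilon>, x\<^sup>2 + ?S \<epsilon>) \<partial>NN \<partial>GG I)
          = (\<integral>\<^sup>+\<epsilon>. \<integral>\<^sup>+x. gy (r*x, x\<^sup>2 + ?S \<epsilon>) \<partial>NN \<partial>GG I)"
        unfolding r_def by (rule insert.IH[OF b'0]) measurable
      then show ?thesis by (simp add: gy_def)
    qed
    then show ?thesis by simp
  qed
  also have "\<dots> = (\<integral>\<^sup>+\<epsilon>. \<integral>\<^sup>+y. \<integral>\<^sup>+x. g (r*x, x\<^sup>2 + y\<^sup>2 + ?S \<epsilon>) \<partial>NN \<partial>NN \<partial>GG I)"
    by (subst GGpair.Fubini') (simp_all add: add_ac GG_def)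
  also have "\<dots> = (\<integral>\<^sup>+\<epsilon>. \<integral>\<^sup>+y. \<integral>\<^sup>+x. g (r*x, x\<^sup>2 + (\<Sum>i\<in>insert j I. ((\<epsilon>(j:=y)) i)\<^sup>2)) \<partial>NN \<partial>NN \<partial>GG I)"
    using insert.hyps by (simp add: sum_upd2[where f="\<lambda>i v. v\<^sup>2"] add_ac)
  also have "\<dots> = (\<integral>\<^sup>+\<epsilon>. \<integral>\<^sup>+x. g (r*x, x\<^sup>2 + (\<Sum>i\<in>insert j I. (\<epsilon> i)\<^sup>2)) \<partial>NN \<partial>GG (insert j I))"
    unfolding GG_def by (rule NNP.product_nn_integral_insert[symmetric]) (use insert.hyps in measurable)
  finally show ?case unfolding r_eq .
qed



lemma exp_half_le2: "exp (1/2::real) \<le> 2"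
proof -
  have "exp (1/2::real) ^ 2 = exp 1" by (simp add: exp_double[symmetric])
  also have "\<dots> \<le> 3" by (rule exp_le)
  finally have "exp (1/2::real) ^ 2 \<le> 2 ^ 2" by simp
  then show ?thesis by (rule power2_le_imp_le) simp
qed

lemma NN_Q2:
  fixes y :: real assumes y: "y \<ge> 0"
  shows "emeasure NN {y<..} \<le> ennreal (2 * exp (- y\<^sup>2 / 2))"
proof (cases "y \<le> 1")
  case True
  have "emeasure NN {y<..} \<le> 1" by (rule NNs.emeasure_le_1)
  also have "1 \<le> ennreal (2 * exp (- y\<^sup>2 / 2))"
  proof -
    have "y\<^sup>2 \<le> 1" using True y by (simp add: power_le_one)
    then have e1: "exp (- (1/2)) \<le> exp (- y\<^sup>2 / 2)" by simp
    have e2: "1/2 \<le> exp (- (1/2::real))"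
      using exp_half_le2 by (simp add: exp_minus field_simps)
    have "1 \<le> 2 * exp (- y\<^sup>2 / 2)" using e1 e2 by linarith
    then show ?thesis by (simp add: ennreal_ge_1)
  qed
  finally show ?thesis .
next
  case False
  then have y1: "y > 1" by simp
  have "emeasure NN {y<..} \<le> ennreal (std_normal_density y / y)" by (rule NN_mills) (use y1 in simp)
  also have "\<dots> \<le> ennreal (2 * exp (- y\<^sup>2 / 2))"
  proof (rule ennreal_leI)
    have "std_normal_density y * 1 \<le> std_normal_density y * y"
      by (rule mult_left_mono) (use y1 in auto)
    then have "std_normal_density y / y \<le> std_normal_density y"
      using y1 by (simp add: divide_le_eq)
    also have "\<dots> \<le> 2 * exp (- y\<^sup>2 / 2)"
    proof -
      have "1 \<le> sqrt (2*pi)" using pi_gt3 by (intro real_sqrt_ge_one) simp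
      then have "1 / sqrt (2*pi) \<le> (2::real)"
        using \<open>1 \<le> sqrt (2*pi)\<close> by (simp add: divide_le_eq del: real_sqrt_ge_1_iff)
      then show ?thesis unfolding std_normal_density_def by (intro mult_right_mono) auto
    qed
    finally show "std_normal_density y / y \<le> 2 * exp (- y\<^sup>2 / 2)" .
  qed
  finally show ?thesis .
qed

lemma mgf_vec:
  assumes K: "finite K" and b: "\<beta> \<ge> 0"
  shows "(\<integral>\<^sup>+\<epsilon>. ennreal (exp (- \<beta> * (\<Sum>i\<in>K. (\<epsilon> i)\<^sup>2))) \<partial>GG K)
       = ennreal (exp (- (real (card K) / 2) * ln (1 + 2*\<beta>)))"
proof -
  have "(\<integral>\<^sup>+\<epsilon>. ennreal (exp (- \<beta> * (\<Sum>i\<in>K. (\<epsilon> i)\<^sup>2))) \<partial>GG K)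
      = (\<integral>\<^sup>+\<epsilon>. (\<Prod>i\<in>K. ennreal (exp (- \<beta> * (\<epsilon> i)\<^sup>2))) \<partial>GG K)"
    using K by (intro nn_integral_cong) (simp add: sum_distrib_left exp_sum prod_ennreal sum_negf[symmetric])
  also have "\<dots> = (\<Prod>i\<in>K. (\<integral>\<^sup>+x. ennreal (exp (- \<beta> * x\<^sup>2)) \<partial>NN))"
    unfolding GG_def by (rule NNP.product_nn_integral_prod[OF K]) simp
  also have "\<dots> = ennreal (1 / sqrt (1 + 2*\<beta>)) ^ card K"
    using NN_mgf[OF b] by simp
  also have "\<dots> = ennreal ((1 / sqrt (1 + 2*\<beta>)) ^ card K)"
    using b by (simp add: ennreal_power[symmetric])
  also have "(1 / sqrt (1 + 2*\<beta>)) ^ card K = exp (- (real (card K) / 2) * ln (1 + 2*\<beta>))"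
  proof -
    have h: "1 / sqrt (1 + 2*\<beta>) = exp (- ln (1 + 2*\<beta>) / 2)"
      using b by (simp add: powr_half_sqrt[symmetric] powr_def exp_minus field_simps)
    have "(1 / sqrt (1 + 2*\<beta>)) ^ card K = exp (- ln (1 + 2*\<beta>) / 2) ^ card K"
      by (simp only: h)
    also have "\<dots> = exp (real (card K) * (- ln (1 + 2*\<beta>) / 2))"
      by (rule exp_of_nat_mult[symmetric])
    also have "\<dots> = exp (- (real (card K) / 2) * ln (1 + 2*\<beta>))"
      by (rule arg_cong[where f=exp]) (simp add: algebra_simps)
    finally show ?thesis .
  qed
  finally show ?thesis .
qed



lemma reduce:
  fixes a :: "nat \<Rightarrow> real" and T :: real
  assumes m: "m \<ge> 1"
  shows "emeasure (std_gauss_vec m) {\<epsilon> \<in> space (std_gauss_vec m). vinner m a \<epsilon> / vnorm m \<epsilon> > T}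
     = (\<integral>\<^sup>+\<epsilon>. \<integral>\<^sup>+x. (\<lambda>p::real\<times>real. if T < fst p / sqrt (snd p) then 1 else (0::ennreal))
            (vnorm m a * x, x\<^sup>2 + (\<Sum>i\<in>{1..<m}. (\<epsilon> i)\<^sup>2)) \<partial>NN \<partial>GG {1..<m})"
proof -
  define g where "g = (\<lambda>p::real\<times>real. if T < fst p / sqrt (snd p) then 1 else (0::ennreal))"
  have gm[measurable]: "g \<in> borel_measurable (borel \<Otimes>\<^sub>M borel)" unfolding g_def by measurable
  have sg: "std_gauss_vec m = GG {..<m}" by (simp add: std_gauss_vec_def GG_def NN_def)
  have ins: "{..<m} = insert 0 {1..<m}" using m by auto
  define E where "E = {\<epsilon> \<in> space (GG {..<m}). vinner m a \<epsilon> / vnorm m \<epsilon> > T}"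
  have Em[measurable]: "E \<in> sets (GG (insert 0 {1..<m}))"
    unfolding E_def ins[symmetric] unfolding vinner_def vnorm_def GG_def by measurable
  let ?A = "\<lambda>\<epsilon>. (\<Sum>i\<in>{1..<m}. a i * \<epsilon> i)"
  let ?S = "\<lambda>\<epsilon>. (\<Sum>i\<in>{1..<m}. (\<epsilon> i)\<^sup>2)"
  have Em': "E \<in> sets (GG {..<m})" using Em by (simp only: ins)
  have "emeasure (GG {..<m}) E = (\<integral>\<^sup>+\<epsilon>. indicator E \<epsilon> \<partial>GG {..<m})"
    using Em' by simp
  also have "\<dots> = (\<integral>\<^sup>+\<epsilon>. indicator E \<epsilon> \<partial>GG (insert 0 {1..<m}))"
    by (simp only: ins)
  also have "\<dots> = (\<integral>\<^sup>+\<epsilon>. \<integral>\<^sup>+x. indicator E (\<epsilon>(0:=x)) \<partial>NN \<partial>GG {1..<m})"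
    unfolding GG_def by (rule NNP.product_nn_integral_insert) (simp, simp, rule borel_measurable_indicator[OF Em[unfolded GG_def]])
  also have "\<dots> = (\<integral>\<^sup>+\<epsilon>. \<integral>\<^sup>+x. g (a 0 * x + ?A \<epsilon>, x\<^sup>2 + ?S \<epsilon>) \<partial>NN \<partial>GG {1..<m})"
  proof (intro nn_integral_cong)
    fix \<epsilon> x assume e: "\<epsilon> \<in> space (GG {1..<m})"
    have sp: "\<epsilon>(0:=x) \<in> space (GG {..<m})"
      using e m unfolding GG_def space_PiM by (auto simp: PiE_def extensional_def)
    have vi: "vinner m a (\<epsilon>(0:=x)) = a 0 * x + ?A \<epsilon>"
      unfolding vinner_def ins by (rule sum_upd[where f="\<lambda>i v. a i * v"]) auto
    have vn: "vnorm m (\<epsilon>(0:=x)) = sqrt (x\<^sup>2 + ?S \<epsilon>)"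
      unfolding vnorm_def ins by (subst sum_upd[where f="\<lambda>i v. v\<^sup>2"]) auto
    show "indicator E (\<epsilon>(0:=x)) = g (a 0 * x + ?A \<epsilon>, x\<^sup>2 + ?S \<epsilon>)"
      using sp by (simp add: E_def g_def vi vn indicator_def)
  qed
  also have "\<dots> = (\<integral>\<^sup>+\<epsilon>. \<integral>\<^sup>+x. g (\<bar>a 0\<bar> * x + ?A \<epsilon>, x\<^sup>2 + ?S \<epsilon>) \<partial>NN \<partial>GG {1..<m})"
  proof (rule nn_integral_cong)
    fix \<epsilon>
    show "(\<integral>\<^sup>+x. g (a 0 * x + ?A \<epsilon>, x\<^sup>2 + ?S \<epsilon>) \<partial>NN) = (\<integral>\<^sup>+x. g (\<bar>a 0\<bar> * x + ?A \<epsilon>, x\<^sup>2 + ?S \<epsilon>) \<partial>NN)"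
    proof (cases "a 0 \<ge> 0")
      case True then show ?thesis by simp
    next
      case False
      have "(\<integral>\<^sup>+x. g (\<bar>a 0\<bar> * x + ?A \<epsilon>, x\<^sup>2 + ?S \<epsilon>) \<partial>NN)
          = (\<integral>\<^sup>+x. (\<lambda>x. g (\<bar>a 0\<bar> * x + ?A \<epsilon>, x\<^sup>2 + ?S \<epsilon>)) (- x) \<partial>NN)"
        by (rule NN_reflect[symmetric]) measurable
      also have "\<dots> = (\<integral>\<^sup>+x. g (a 0 * x + ?A \<epsilon>, x\<^sup>2 + ?S \<epsilon>) \<partial>NN)"
        using False by simp
      finally show ?thesis ..
    qed
  qed
  also have "\<dots> = (\<integral>\<^sup>+\<epsilon>. \<integral>\<^sup>+x. g (sqrt (\<bar>a 0\<bar>\<^sup>2 + (\<Sum>i\<in>{1..<m}. (a i)\<^sup>2)) * x, x\<^sup>2 + ?S \<epsilon>) \<partial>NN \<partial>GG {1..<m})"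
    by (rule rot_induct) auto
  also have "sqrt (\<bar>a 0\<bar>\<^sup>2 + (\<Sum>i\<in>{1..<m}. (a i)\<^sup>2)) = vnorm m a"
    unfolding vnorm_def ins by simp
  finally show ?thesis unfolding sg E_def g_def .
qed



lemma ratio_le1:
  fixes x S :: real assumes "S \<ge> 0"
  shows "x / sqrt (x\<^sup>2 + S) \<le> 1"
proof (cases "sqrt (x\<^sup>2 + S) = 0")
  case True then show ?thesis by simp
next
  case False
  have "x\<^sup>2 + S \<ge> 0" using assms by simp
  moreover have "x\<^sup>2 + S \<noteq> 0" using False by auto
  ultimately have "x\<^sup>2 + S > 0" by simp
  then have q: "sqrt (x\<^sup>2 + S) > 0" by simp
  have "x \<le> sqrt (x\<^sup>2)" by simp
  also have "\<dots> \<le> sqrt (x\<^sup>2 + S)" by (rule real_sqrt_le_mono) (use assms in simp)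
  finally show ?thesis using q by (simp add: divide_le_eq)
qed

lemma inner_zero:
  fixes R t S :: real assumes R: "R \<ge> 0" and t: "t \<ge> 1" and S: "S \<ge> 0"
  shows "(\<integral>\<^sup>+x. (\<lambda>p::real\<times>real. if t * R < fst p / sqrt (snd p) then 1 else (0::ennreal)) (R*x, x\<^sup>2 + S) \<partial>NN) = 0"
proof -
  have "\<not> (t * R < R * x / sqrt (x\<^sup>2 + S))" for x
  proof -
    have "R * x / sqrt (x\<^sup>2 + S) = R * (x / sqrt (x\<^sup>2 + S))" by simp
    also have "\<dots> \<le> R * 1" using ratio_le1[OF S] R by (intro mult_left_mono) auto
    also have "\<dots> \<le> t * R" using mult_right_mono[of 1 t R] t R by simp
    finally show ?thesis by simp
  qed
  then show ?thesis by simp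
qed

lemma inner_bound:
  fixes R t S c w0 lam :: real
  assumes R: "R \<ge> 0" and t0: "0 < t" and t1: "t < 1" and S: "S \<ge> 0"
    and c: "c = t\<^sup>2 / (1 - t\<^sup>2)" and w0: "w0 > 0" and lam: "lam \<ge> 0"
  shows "(\<integral>\<^sup>+x. (\<lambda>p::real\<times>real. if t * R < fst p / sqrt (snd p) then 1 else (0::ennreal)) (R*x, x\<^sup>2 + S) \<partial>NN)
    \<le> ennreal ((1 / sqrt (2*pi*c*w0)) * exp (- (c/2) * S) + (2 * exp (lam * w0)) * exp (- (c/2 + lam) * S))"
proof (cases "R = 0")
  case True then show ?thesis by simp
next
  case False
  with R have R0: "R > 0" by simp
  have c0: "c > 0" using c t0 t1 by (simp add: power_less_one_iff)
  define y where "y = sqrt (c * S)"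
  have y0: "y \<ge> 0" using c0 S by (simp add: y_def)
  have ptw: "(\<lambda>p::real\<times>real. if t * R < fst p / sqrt (snd p) then 1 else (0::ennreal)) (R*x, x\<^sup>2 + S)
      \<le> indicator {y<..} x" for x
  proof (cases "t * R < R * x / sqrt (x\<^sup>2 + S)")
    case True
    define q where "q = sqrt (x\<^sup>2 + S)"
    have q0: "q \<ge> 0" using S by (simp add: q_def add_nonneg_nonneg)
    have "R * x / sqrt (x\<^sup>2 + S) = R * (x / q)" by (simp add: q_def)
    then have "R * t < R * (x / q)" using True by (simp only: mult.commute[of t R])
    then have tq: "t < x / q" using R0 by (simp only: mult_less_cancel_left_pos)
    then have qpos: "q > 0" using t0 q0 by (cases "q = 0") auto
    then have "t * q < x" using tq by (simp add: less_divide_eq)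
    moreover have "0 < t * q" using t0 qpos by simp
    ultimately have x0: "x > 0" by linarith
    have "(t*q)\<^sup>2 < x\<^sup>2" using \<open>t * q < x\<close> t0 qpos by (intro power_strict_mono) auto
    then have "t\<^sup>2 * (x\<^sup>2 + S) < x\<^sup>2" using S by (simp add: q_def power_mult_distrib add_nonneg_nonneg)
    then have "t\<^sup>2 * S < x\<^sup>2 * (1 - t\<^sup>2)" by (simp add: algebra_simps)
    then have "c * S < x\<^sup>2" using t1 t0 by (simp add: c field_simps power_less_one_iff)
    then have "sqrt (c * S) < sqrt (x\<^sup>2)" by (simp only: real_sqrt_less_iff)
    then have "y < x" using x0 unfolding y_def by simp
    then show ?thesis using True by simp
  qed simp
  have "(\<integral>\<^sup>+x. (\<lambda>p::real\<times>real. if t * R < fst p / sqrt (snd p) then 1 else (0::ennreal)) (R*x, x\<^sup>2 + S) \<partial>NN)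
      \<le> (\<integral>\<^sup>+x. indicator {y<..} x \<partial>NN)"
    by (intro nn_integral_mono ptw)
  also have "\<dots> = emeasure NN {y<..}" by simp
  also have "\<dots> \<le> ennreal ((1 / sqrt (2*pi*c*w0)) * exp (- (c/2) * S) + (2 * exp (lam * w0)) * exp (- (c/2 + lam) * S))"
  proof (cases "S \<ge> w0")
    case True
    have ys: "y \<ge> sqrt (c * w0)" unfolding y_def using True c0 by simp
    have "sqrt (c * w0) > 0" using c0 w0 by simp
    then have ypos: "y > 0" using ys by linarith
    have "emeasure NN {y<..} \<le> ennreal (std_normal_density y / y)" by (rule NN_mills[OF ypos])
    also have "std_normal_density y / y \<le> (1 / sqrt (2*pi*c*w0)) * exp (- (c/2) * S)"
    proof -
      have y2: "y\<^sup>2 = c * S" using c0 S by (simp add: y_def)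
      have "std_normal_density y / y = exp (- (c/2) * S) / (sqrt (2*pi) * y)"
        by (simp add: std_normal_density_def y2)
      also have "\<dots> \<le> exp (- (c/2) * S) / (sqrt (2*pi) * sqrt (c * w0))"
        using ys c0 w0 ypos by (intro divide_left_mono mult_left_mono mult_pos_pos) auto
      also have "\<dots> = (1 / sqrt (2*pi*c*w0)) * exp (- (c/2) * S)"
        by (simp add: real_sqrt_mult mult.assoc)
      finally show ?thesis .
    qed
    then have "ennreal (std_normal_density y / y) \<le> ennreal ((1 / sqrt (2*pi*c*w0)) * exp (- (c/2) * S))"
      by (rule ennreal_leI)
    also have "\<dots> \<le> ennreal ((1 / sqrt (2*pi*c*w0)) * exp (- (c/2) * S) + (2 * exp (lam * w0)) * exp (- (c/2 + lam) * S))"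
      by (intro ennreal_leI) simp
    finally show ?thesis .
  next
    case False
    have "emeasure NN {y<..} \<le> ennreal (2 * exp (- y\<^sup>2 / 2))" by (rule NN_Q2[OF y0])
    also have "2 * exp (- y\<^sup>2 / 2) \<le> (2 * exp (lam * w0)) * exp (- (c/2 + lam) * S)"
    proof -
      have y2: "y\<^sup>2 = c * S" using c0 S by (simp add: y_def)
      have "- y\<^sup>2 / 2 \<le> lam * w0 + - (c/2 + lam) * S"
        using False lam mult_right_mono[of S w0 lam] unfolding y2 by (simp add: algebra_simps)
      then have "exp (- y\<^sup>2 / 2) \<le> exp (lam * w0) * exp (- (c/2 + lam) * S)"
        by (simp add: exp_add[symmetric])
      then show ?thesis by simp
    qed
    then have "ennreal (2 * exp (- y\<^sup>2 / 2)) \<le> ennreal ((2 * exp (lam * w0)) * exp (- (c/2 + lam) * S))"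
      by (rule ennreal_leI)
    also have "\<dots> \<le> ennreal ((1 / sqrt (2*pi*c*w0)) * exp (- (c/2) * S) + (2 * exp (lam * w0)) * exp (- (c/2 + lam) * S))"
      using c0 w0 by (intro ennreal_leI) simp
    finally show ?thesis .
  qed
  finally show ?thesis .
qed



lemma sqrt_exp_ln: "x > 0 \<Longrightarrow> exp (ln x / 2) = sqrt x"
  by (simp add: powr_half_sqrt[symmetric] powr_def)

lemma final_real:
  fixes k n L :: real
  assumes k: "k \<ge> 2" and n: "n \<ge> k + 1" and L1: "L > n - k + 1" and L2: "2*L < n"
  defines "u \<equiv> 1 - 2*L/n"
  defines "c \<equiv> (2*L/n) / u" and "w0 \<equiv> k * u / 2" and "lam \<equiv> 1 / (2*u)"
  shows "(1 / sqrt (2*pi*c*w0)) * exp (- (k/2) * ln (1 + 2*(c/2)))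
       + (2 * exp (lam*w0)) * exp (- (k/2) * ln (1 + 2*(c/2 + lam)))
     \<le> (1 + 2 * sqrt (pi * (k+1)) * exp (- k/12)) * exp (- L) / sqrt (pi * L)"
proof -
  have n0: "n > 0" using k n by simp
  have L0: "L > 0" using L1 n by simp
  have u0: "u > 0" using L2 n0 by (simp add: u_def field_simps)
  have u1: "u < 1" using L0 n0 by (simp add: u_def)
  have Lk: "L \<le> k + 1" using L1 L2 by simp
  define W where "W = exp ((k/2) * ln u)"
  have W0: "W > 0" by (simp add: W_def)
  have keyW: "W \<le> exp (- L) * sqrt (k/n)"
  proof -
    have "(k/2) * ln (1 - 2*L/(k + (n-k))) \<le> - L + ln (k/(k + (n-k))) / 2"
      by (rule key_ineq) (use k n L1 L2 in auto)
    then have "(k/2) * ln u \<le> - L + ln (k/n) / 2" by (simp add: u_def)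
    then have "W \<le> exp (- L + ln (k/n) / 2)" unfolding W_def by simp
    also have "\<dots> = exp (- L) * exp (ln (k/n) / 2)" by (rule exp_add)
    also have "\<dots> = exp (- L) * sqrt (k/n)" using k n0 by (subst sqrt_exp_ln) auto
    finally show ?thesis .
  qed
  have d0: "n - 2*L > 0" using L2 by simp
  have un: "u = (n - 2*L)/n" using n0 by (simp add: u_def field_simps)
  have cc: "c = 2*L/(n - 2*L)" using n0 d0 unfolding c_def un by (simp add: divide_divide_eq_right)
  have e1: "1 + 2*(c/2) = 1/u" using n0 d0 unfolding cc un by (simp add: field_simps)
  have e2: "1 + 2*(c/2 + lam) = 2/u"
  proof -
    have "1 + 2*(c/2 + lam) = (1 + 2*(c/2)) + 2*lam" by (simp add: algebra_simps)
    also have "\<dots> = 1/u + 1/u" unfolding e1 lam_def using u0 by simp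
    finally show ?thesis by simp
  qed
  have E1: "exp (- (k/2) * ln (1 + 2*(c/2))) = W"
    unfolding e1 W_def using u0 by (simp add: ln_div)
  have E2: "exp (- (k/2) * ln (1 + 2*(c/2 + lam))) = W * exp (- (k/2) * ln 2)"
    unfolding e2 W_def using u0 by (simp add: ln_div exp_add[symmetric] algebra_simps)
  have cw: "c * w0 = L * k / n" using u0 by (simp add: c_def w0_def field_simps)
  have lw: "lam * w0 = k/4" using u0 by (simp add: lam_def w0_def field_simps)
  have T1: "(1 / sqrt (2*pi*c*w0)) * W \<le> exp (- L) / sqrt (pi * L)"
  proof -
    have s: "sqrt (2*pi*c*w0) = sqrt (2*pi*L) * sqrt (k/n)"
      by (simp add: mult.assoc cw real_sqrt_mult[symmetric])
    have pos: "sqrt (2*pi*L) * sqrt (k/n) > 0" using L0 k n0 by simp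
    have "(1 / sqrt (2*pi*c*w0)) * W \<le> (1 / sqrt (2*pi*c*w0)) * (exp (- L) * sqrt (k/n))"
      using keyW pos s by (intro mult_left_mono) auto
    also have "\<dots> = exp (- L) / sqrt (2*pi*L)" using pos k n0 L0 unfolding s by (simp add: field_simps)
    also have "\<dots> \<le> exp (- L) / sqrt (pi * L)"
      using L0 by (intro divide_left_mono) auto
    finally show ?thesis .
  qed
  have T2: "(2 * exp (lam*w0)) * (W * exp (- (k/2) * ln 2)) \<le> 2 * exp (- k/12) * exp (- L)"
  proof -
    have a: "exp (lam*w0) * exp (- (k/2) * ln 2) \<le> exp (- k/12)"
    proof -
      have "k/4 + (- (k/2) * ln 2) \<le> - k/12"
      proof -
        have h: "(k/2)*(2/3) \<le> (k/2)*ln 2" by (rule mult_left_mono[OF ln2_ge_two_thirds]) (use k in simp)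
        then show ?thesis by linarith
      qed
      then show ?thesis unfolding lw by (simp add: exp_add[symmetric])
    qed
    have b: "W \<le> exp (- L)"
    proof -
      have "sqrt (k/n) \<le> 1" using k n by simp
      then have "exp (- L) * sqrt (k/n) \<le> exp (- L)" by (simp add: mult_left_le)
      then show ?thesis using keyW by linarith
    qed
    have "(2 * exp (lam*w0)) * (W * exp (- (k/2) * ln 2)) = 2 * (exp (lam*w0) * exp (- (k/2) * ln 2)) * W"
      by (simp add: mult_ac)
    also have "\<dots> \<le> 2 * exp (- k/12) * exp (- L)"
      using a b W0 by (intro mult_mono) auto
    finally show ?thesis .
  qed
  have T3: "2 * exp (- k/12) * exp (- L) \<le> 2 * sqrt (pi * (k+1)) * exp (- k/12) * exp (- L) / sqrt (pi * L)"
  proof -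
    have "sqrt (pi * L) \<le> sqrt (pi * (k+1))" using Lk by simp
    then have "1 \<le> sqrt (pi * (k+1)) / sqrt (pi * L)" using L0 by simp
    then have "2 * exp (- k/12) * exp (- L) * 1 \<le> 2 * exp (- k/12) * exp (- L) * (sqrt (pi * (k+1)) / sqrt (pi * L))"
      by (intro mult_left_mono) auto
    then show ?thesis by (simp add: field_simps)
  qed
  have "(1 / sqrt (2*pi*c*w0)) * exp (- (k/2) * ln (1 + 2*(c/2)))
       + (2 * exp (lam*w0)) * exp (- (k/2) * ln (1 + 2*(c/2 + lam)))
      \<le> exp (- L) / sqrt (pi * L) + 2 * sqrt (pi * (k+1)) * exp (- k/12) * exp (- L) / sqrt (pi * L)"
    unfolding E1 E2 using T1 T2 T3 by linarith
  also have "\<dots> = (1 + 2 * sqrt (pi * (k+1)) * exp (- k/12)) * exp (- L) / sqrt (pi * L)"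
    by (simp add: add_divide_distrib algebra_simps)
  finally show ?thesis .
qed



definition rr :: "nat \<Rightarrow> real" where
  "rr m = 2 * sqrt (pi * real m) * exp (- (real m - 1) / 12)"

lemma rr_lim: "rr \<longlonglongrightarrow> 0"
  unfolding rr_def by real_asymp

lemma rr_nonneg: "rr m \<ge> 0"
  unfolding rr_def by simp

lemma main_bound:
  fixes n p m :: nat and a :: "nat \<Rightarrow> real" and \<eta> :: real
  assumes nm: "n \<ge> m" and m3: "m \<ge> 3" and eta0: "0 < \<eta>"
    and eta1: "\<eta> < real p * exp (- (real n - real m) - 2)"
  shows "measure (std_gauss_vec m)
          {\<epsilon> \<in> space (std_gauss_vec m).
             vinner m a \<epsilon> / vnorm m \<epsilon> >
               sqrt (2 * ln (real p / \<eta>) / real n) * vnorm m a}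
        \<le> (1 / real p) * ((1 + rr m) * \<eta> / sqrt (pi * ln (real p / \<eta>)))"
proof -
  define L where "L = ln (real p / \<eta>)"
  define t where "t = sqrt (2 * L / real n)"
  define R where "R = vnorm m a"
  define k where "k = real m - 1"
  define K where "K = {1..<m}"
  have R0: "R \<ge> 0" by (simp add: R_def vnorm_def sum_nonneg)
  have p0: "real p > 0"
  proof -
    have "0 < real p * exp (- (real n - real m) - 2)" using eta0 eta1 by linarith
    then show ?thesis by (simp add: zero_less_mult_iff)
  qed
  have Lgt: "L > real n - real m + 2"
  proof -
    have "\<eta> * exp (real n - real m + 2) < real p * exp (- (real n - real m) - 2) * exp (real n - real m + 2)"
      using eta1 by simp
    also have "\<dots> = real p" by (simp add: exp_add[symmetric])
    finally have "exp (real n - real m + 2) < real p / \<eta>" using eta0 by (simp add: field_simps)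
    then have "ln (exp (real n - real m + 2)) < ln (real p / \<eta>)"
      using eta0 p0 by (subst ln_less_cancel_iff) auto
    then show ?thesis by (simp add: L_def)
  qed
  have L0: "L > 0" using Lgt nm by simp
  have n0: "real n > 0" using nm m3 by simp
  have expL: "exp (- L) = \<eta> / real p"
  proof -
    have e: "exp L = real p / \<eta>" using eta0 p0 by (simp add: L_def)
    show ?thesis by (simp add: exp_minus e)
  qed
  have rhs: "(1 / real p) * ((1 + rr m) * \<eta> / sqrt (pi * L)) = (1 + rr m) * exp (- L) / sqrt (pi * L)"
    by (simp add: expL)
  have red: "emeasure (std_gauss_vec m) {\<epsilon> \<in> space (std_gauss_vec m). vinner m a \<epsilon> / vnorm m \<epsilon> > t * R}
     = (\<integral>\<^sup>+\<epsilon>. \<integral>\<^sup>+x. (\<lambda>p::real\<times>real. if t * R < fst p / sqrt (snd p) then 1 else (0::ennreal))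
            (R * x, x\<^sup>2 + (\<Sum>i\<in>K. (\<epsilon> i)\<^sup>2)) \<partial>NN \<partial>GG K)"
    unfolding R_def K_def by (rule reduce) (use m3 in simp)
  have goal: "measure (std_gauss_vec m) {\<epsilon> \<in> space (std_gauss_vec m). vinner m a \<epsilon> / vnorm m \<epsilon> > t * R}
      \<le> (1 + rr m) * exp (- L) / sqrt (pi * L)"
  proof (cases "t \<ge> 1")
    case True
    have "emeasure (std_gauss_vec m) {\<epsilon> \<in> space (std_gauss_vec m). vinner m a \<epsilon> / vnorm m \<epsilon> > t * R} = 0"
      unfolding red by (subst inner_zero[OF R0 True]) (auto simp: sum_nonneg)
    then show ?thesis using rr_nonneg[of m] L0 by (simp add: measure_def)
  next
    case False
    then have t1: "t < 1" by simp
    have t0: "t > 0" using L0 n0 by (simp add: t_def)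
    have t2: "t\<^sup>2 = 2 * L / real n" using L0 n0 by (simp add: t_def)
    have "t\<^sup>2 < 1" using t1 t0 by (simp add: power_less_one_iff)
    then have "2 * L / real n < 1" by (simp add: t2)
    then have L2: "2 * L < real n" using n0 by (simp add: divide_less_eq)
    define u where "u = 1 - 2 * L / real n"
    define c where "c = (2 * L / real n) / u"
    define w0 where "w0 = k * u / 2"
    define lam where "lam = 1 / (2 * u)"
    have u0: "u > 0" using L2 n0 by (simp add: u_def field_simps)
    have cdef: "c = t\<^sup>2 / (1 - t\<^sup>2)" by (simp add: c_def u_def t2)
    have k2: "k \<ge> 2" using m3 by (simp add: k_def)
    have w00: "w0 > 0" using k2 u0 by (simp add: w0_def)
    have lam0: "lam \<ge> 0" using u0 by (simp add: lam_def)
    define A where "A = 1 / sqrt (2*pi*c*w0)"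
    define B where "B = 2 * exp (lam*w0)"
    have c00: "c \<ge> 0" using u0 L0 n0 by (simp add: c_def)
    have A0: "A \<ge> 0" using c00 w00 by (simp add: A_def)
    have B0: "B \<ge> 0" by (simp add: B_def)
    have cardK: "real (card K) = k" using m3 by (simp add: K_def k_def)
    have "emeasure (std_gauss_vec m) {\<epsilon> \<in> space (std_gauss_vec m). vinner m a \<epsilon> / vnorm m \<epsilon> > t * R}
        \<le> (\<integral>\<^sup>+\<epsilon>. ennreal (A * exp (- (c/2) * (\<Sum>i\<in>K. (\<epsilon> i)\<^sup>2)) + B * exp (- (c/2 + lam) * (\<Sum>i\<in>K. (\<epsilon> i)\<^sup>2))) \<partial>GG K)"
      unfolding red A_def B_def
      by (intro nn_integral_mono inner_bound[OF R0 t0 t1 _ cdef w00 lam0]) (simp add: sum_nonneg)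
    also have "\<dots> = (\<integral>\<^sup>+\<epsilon>. ennreal A * ennreal (exp (- (c/2) * (\<Sum>i\<in>K. (\<epsilon> i)\<^sup>2))) + ennreal B * ennreal (exp (- (c/2 + lam) * (\<Sum>i\<in>K. (\<epsilon> i)\<^sup>2))) \<partial>GG K)"
      using A0 B0 by (intro nn_integral_cong) (simp add: ennreal_mult ennreal_plus[symmetric])
    also have "\<dots> = ennreal A * (\<integral>\<^sup>+\<epsilon>. ennreal (exp (- (c/2) * (\<Sum>i\<in>K. (\<epsilon> i)\<^sup>2))) \<partial>GG K)
                  + ennreal B * (\<integral>\<^sup>+\<epsilon>. ennreal (exp (- (c/2 + lam) * (\<Sum>i\<in>K. (\<epsilon> i)\<^sup>2))) \<partial>GG K)"
      unfolding GG_def by (subst nn_integral_add) (auto simp: nn_integral_cmult)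
    also have "\<dots> = ennreal A * ennreal (exp (- (k/2) * ln (1 + 2*(c/2))))
                  + ennreal B * ennreal (exp (- (k/2) * ln (1 + 2*(c/2 + lam))))"
    proof -
      have c0: "c \<ge> 0" using u0 L0 n0 by (simp add: c_def)
      have fK: "finite K" by (simp add: K_def)
      show ?thesis
        using mgf_vec[OF fK, of "c/2"] mgf_vec[OF fK, of "c/2 + lam"] c0 lam0 unfolding cardK by simp
    qed
    also have "\<dots> = ennreal (A * exp (- (k/2) * ln (1 + 2*(c/2))) + B * exp (- (k/2) * ln (1 + 2*(c/2 + lam))))"
      using A0 B0 by (simp add: ennreal_mult ennreal_plus)
    finally have em: "emeasure (std_gauss_vec m) {\<epsilon> \<in> space (std_gauss_vec m). vinner m a \<epsilon> / vnorm m \<epsilon> > t * R}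
        \<le> ennreal (A * exp (- (k/2) * ln (1 + 2*(c/2))) + B * exp (- (k/2) * ln (1 + 2*(c/2 + lam))))" .
    have fr: "A * exp (- (k/2) * ln (1 + 2*(c/2))) + B * exp (- (k/2) * ln (1 + 2*(c/2 + lam)))
        \<le> (1 + 2 * sqrt (pi * (k+1)) * exp (- k/12)) * exp (- L) / sqrt (pi * L)"
      unfolding A_def B_def c_def w0_def lam_def u_def
      by (rule final_real) (use k2 nm Lgt L2 in \<open>auto simp: k_def\<close>)
    have "(1 + 2 * sqrt (pi * (k+1)) * exp (- k/12)) = 1 + rr m"
      by (simp add: rr_def k_def)
    then have fr': "A * exp (- (k/2) * ln (1 + 2*(c/2))) + B * exp (- (k/2) * ln (1 + 2*(c/2 + lam)))
        \<le> (1 + rr m) * exp (- L) / sqrt (pi * L)" using fr by simp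
    have nn: "0 \<le> (1 + rr m) * exp (- L) / sqrt (pi * L)" using rr_nonneg[of m] L0
      by (intro divide_nonneg_nonneg mult_nonneg_nonneg) auto
    show ?thesis unfolding measure_def
      by (rule enn2real_leI[OF nn order.trans[OF em ennreal_leI[OF fr']]])
  qed
  from goal have "measure (std_gauss_vec m) {\<epsilon> \<in> space (std_gauss_vec m). vinner m a \<epsilon> / vnorm m \<epsilon> > t * R}
      \<le> (1 / real p) * ((1 + rr m) * \<eta> / sqrt (pi * L))" unfolding rhs .
  then show ?thesis unfolding t_def R_def L_def .
qed


theorem mainTheorem10:
  "\<exists>r :: nat \<Rightarrow> real. r \<longlonglongrightarrow> 0 \<and>
     (\<forall>(n::nat) (p::nat) (m::nat) (a::nat \<Rightarrow> real) (\<eta>::real).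
        n \<ge> m \<longrightarrow> m \<ge> 3 \<longrightarrow> 0 < \<eta> \<longrightarrow>
        \<eta> < real p * exp (- (real n - real m) - 2) \<longrightarrow>
        measure (std_gauss_vec m)
          {\<epsilon> \<in> space (std_gauss_vec m).
             vinner m a \<epsilon> / vnorm m \<epsilon> >
               sqrt (2 * ln (real p / \<eta>) / real n) * vnorm m a}
        \<le> (1 / real p) * ((1 + r m) * \<eta> / sqrt (pi * ln (real p / \<eta>))))"
proof (intro exI[of _ rr] conjI rr_lim allI impI)
  fix n p m :: nat and a :: "nat \<Rightarrow> real" and \<eta> :: real
  assume "n \<ge> m" "m \<ge> 3" "0 < \<eta>" "\<eta> < real p * exp (- (real n - real m) - 2)"
  then show "measure (std_gauss_vec m)
          {\<epsilon> \<in> space (std_gauss_vec m).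
             vinner m a \<epsilon> / vnorm m \<epsilon> >
               sqrt (2 * ln (real p / \<eta>) / real n) * vnorm m a}
        \<le> (1 / real p) * ((1 + rr m) * \<eta> / sqrt (pi * ln (real p / \<eta>)))"
    by (rule main_bound)
qed

end
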